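(* Assume the standing assumptions (A1)–(A4) and let $r>0$ be a constant such that $\|u\|^2+\|w\|^2\le r$ for every $u\in\mathcal U$ and every extreme point $w$ of $\mathcal W$. Then the optimal value of \[ (\overline{RLP})\quad \min_{x,\lambda,\Lambda,\rho}\ c^Tx+\lambda+r\rho\ \ \text{s.t.}\ \ x\in\mathcal X,\ \ \lambda g_1g_1^T-\tfrac12G(x)+\tfrac12(E^T\Lambda^T+\Lambda E)+\rho I\in\mathrm{COP}(\widehat{\mathcal U}\times\mathbb R^m_+),\ \ \rho\ge0, \] with $\lambda,\rho\in\mathbb R$, $\Lambda\in\mathbb R^{(k+m)\times n_2}$, equals $v^*_{RLP}$.
   Context: Data: $A\in\mathbb R^{m\times n_1}$, $B\in\mathbb R^{m\times n_2}$, $c\in\mathbb R^{n_1}$, $d\in\mathbb R^{n_2}$, $F\in\mathbb R^{m\times k}$, $\mathcal X\subseteq\mathbb R^{n_1}$ closed convex. $\widehat{\mathcal U}\subseteq\mathbb R_+\times\mathbb R^{k-1}$ is a closed, convex, full-dimensional cone and $\mathcal U:=\{u\in\widehat{\mathcal U}: u_1=1\}$, assumed nonempty and compact. $e_1\in\mathbb R^k$ is the first standard basis vector, $g_1:=(e_1;0)\in\mathbb R^{k+m}$. The two-stage problem (RLP) is: $v^*_{RLP}:=\inf\{c^Tx+\sup_{u\in\mathcal U}d^Ty(u)\}$ over $x\in\mathcal X$ and maps $y:\mathcal U\to\mathbb R^{n_2}$ with $Ax+By(u)\ge Fu$ for all $u\in\mathcal U$. Standing assumptions: (A1) $\mathcal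 X$ and $\widehat{\mathcal U}$ are computationally tractable; (A2) (RLP) is feasible; (A3) $v^*_{RLP}$ is finite; (A4) relatively complete recourse: for all $x\in\mathcal X$, $u\in\mathcal U$ there is $y\in\mathbb R^{n_2}$ with $By\ge Fu-Ax$. Define $\mathcal W:=\{w\in\mathbb R^m: w\ge0,\ B^Tw=d\}$, $E:=\begin{pmatrix}-de_1^T & B^T\end{pmatrix}\in\mathbb R^{n_2\times(k+m)}$, $G(x):=\begin{pmatrix}0&(F-Axe_1^T)^T\\ F-Axe_1^T&0\end{pmatrix}\in\mathcal S^{k+m}$. For a closed convex cone $\mathcal K\subseteq\mathbb R^n$, $\mathrm{COP}(\mathcal K):=\{M\in\mathcal S^n: z^TMz\ge0\ \forall z\in\mathcal K\}$. *)

theory Defs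
  imports "HOL-Analysis.Analysis"
begin

text \<open>Dimensions are index types: 'n1, 'n2 (decision variables), 'm (constraints),
  'k (uncertainty). The distinguished index i1 :: 'k plays the role of the first
  coordinate (e_1). Vectors in R^(k+m) are indexed by the sum type 'k + 'm,
  with Inl i the first k coordinates and Inr l the last m coordinates.\<close>

definition copositive :: "(real^'n::finite) set \<Rightarrow> (real^'n^'n) set" where
  "copositive K = {M. transpose M = M \<and> (\<forall>z\<in>K. 0 \<le> z \<bullet> (M *v z))}"

definition join_vec :: "real^'k::finite \<Rightarrow> real^'m::finite \<Rightarrow> real^('k + 'm)" where
  "join_vec u w = (\<chi> j. case j of Inl i \<Rightarrow> u $ i | Inr l \<Rightarrow> w $ l)"

definition prod_cone :: "(real^'k::finite) set \<Rightarrow> (real^('k + 'm::finite)) set" where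
  "prod_cone Uh = {join_vec u (w :: real^'m) | u w. u \<in> Uh \<and> (\<forall>l. 0 \<le> w $ l)}"

definition unc_set :: "'k::finite \<Rightarrow> (real^'k) set \<Rightarrow> (real^'k) set" where
  "unc_set i1 Uh = {u \<in> Uh. u $ i1 = 1}"

definition dual_set :: "real^'n2::finite^'m::finite \<Rightarrow> real^'n2 \<Rightarrow> (real^'m) set" where
  "dual_set B d = {w. (\<forall>l. 0 \<le> w $ l) \<and> transpose B *v w = d}"

definition e1 :: "'k::finite \<Rightarrow> real^'k" where
  "e1 i1 = (\<chi> i. if i = i1 then 1 else 0)"

definition g1 :: "'k::finite \<Rightarrow> real^('k + 'm::finite)" where
  "g1 i1 = join_vec (e1 i1) 0"

text \<open>E = ( -d e_1^T  B^T ) in R^(n2 x (k+m)).\<close>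
definition Emat :: "'k::finite \<Rightarrow> real^'n2::finite \<Rightarrow> real^'n2^'m::finite \<Rightarrow> real^('k + 'm)^'n2" where
  "Emat i1 d B = (\<chi> j q. case q of Inl i \<Rightarrow> - (d $ j) * (e1 i1 $ i)
                                 | Inr l \<Rightarrow> B $ l $ j)"

text \<open>G(x) = [[0, (F - A x e_1^T)^T], [F - A x e_1^T, 0]].\<close>
definition Gmat :: "'k::finite \<Rightarrow> real^'n1::finite^'m::finite \<Rightarrow> real^'k^'m \<Rightarrow> real^'n1 \<Rightarrow> real^('k + 'm)^('k + 'm)" where
  "Gmat i1 A F x =
     (let H = (\<chi> l i. F $ l $ i - (A *v x) $ l * (e1 i1 $ i)) :: real^'k^'m in
      (\<chi> p q. case (p, q) of
          (Inl i, Inr l) \<Rightarrow> H $ l $ i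
        | (Inr l, Inl i) \<Rightarrow> H $ l $ i
        | _ \<Rightarrow> 0))"

definition outer :: "real^'n::finite \<Rightarrow> real^'n^'n" where
  "outer g = (\<chi> i j. g $ i * g $ j)"

definition rlp_value ::
  "(real^'n1::finite) set \<Rightarrow> real^'n1 \<Rightarrow> real^'n2::finite \<Rightarrow> real^'n1^'m::finite \<Rightarrow> real^'n2^'m \<Rightarrow> real^'k::finite^'m
   \<Rightarrow> (real^'k) set \<Rightarrow> ereal" where
  "rlp_value X c d A B F U =
     Inf {ereal (c \<bullet> x) + (SUP u\<in>U. ereal (d \<bullet> y u)) | x y.
            x \<in> X \<and> (\<forall>u\<in>U. \<forall>l. (A *v x + B *v y u) $ l \<ge> (F *v u) $ l)}"

definition cop_matrix ::
  "'k::finite \<Rightarrow> real^'n2::finite \<Rightarrow> real^'n1::finite^'m::finite \<Rightarrow> real^'n2^'m \<Rightarrow> real^'k^'m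
   \<Rightarrow> real^'n1 \<Rightarrow> real \<Rightarrow> real^'n2^('k + 'm) \<Rightarrow> real \<Rightarrow> real^('k + 'm)^('k + 'm)" where
  "cop_matrix i1 d A B F x lam Lam rho =
     lam *\<^sub>R outer (g1 i1) - (1/2) *\<^sub>R Gmat i1 A F x
     + (1/2) *\<^sub>R (transpose (Lam ** Emat i1 d B) + Lam ** Emat i1 d B)
     + rho *\<^sub>R mat 1"

definition rlp_bar_value ::
  "'k::finite \<Rightarrow> (real^'n1::finite) set \<Rightarrow> real^'n1 \<Rightarrow> real^'n2::finite \<Rightarrow> real^'n1^'m::finite \<Rightarrow> real^'n2^'m \<Rightarrow> real^'k^'m
   \<Rightarrow> (real^'k) set \<Rightarrow> real \<Rightarrow> ereal" where
  "rlp_bar_value i1 X c d A B F Uh r =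
     Inf {ereal (c \<bullet> x + lam + r * rho) | x lam (Lam :: real^'n2^('k + 'm)) rho.
            x \<in> X \<and> rho \<ge> 0 \<and>
            cop_matrix i1 d A B F x lam Lam rho \<in> copositive (prod_cone Uh :: (real^('k+'m)) set)}"

end

theory Submission
  imports Defs
begin

lemma sum_plus_univ: "sum f (UNIV::('a::finite+'b::finite) set) = sum (f \<circ> Inl) UNIV + sum (f \<circ> Inr) UNIV"
  by (metis UNIV_Plus_UNIV finite sum.Plus)

lemma inner_outer: "(X::real^'n::finite^'n) \<bullet> outer z = z \<bullet> (X *v z)"
  by (simp add: inner_vec_def matrix_vector_mult_def outer_def sum_distrib_left mult_ac)

lemma outer_outer: "outer (g::real^'n::finite) \<bullet> outer z = (g \<bullet> z)^2"
proof -
  have "outer g *v z = (g \<bullet> z) *\<^sub>R g"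
    by (simp add: vec_eq_iff matrix_vector_mult_def outer_def inner_vec_def sum_distrib_left mult_ac)
  then show ?thesis by (simp add: inner_outer power2_eq_square inner_commute)
qed

lemma inner_transpose_transpose: "transpose (X::real^'n::finite^'n) \<bullet> transpose Y = X \<bullet> Y"
  unfolding inner_vec_def transpose_def by (simp add: inner_real_def, subst sum.swap, simp)

lemma transpose_outer: "transpose (outer z) = outer z"
  by (simp add: transpose_def outer_def vec_eq_iff mult.commute)

lemma transpose_inner_outer: "transpose (X::real^'n::finite^'n) \<bullet> outer z = X \<bullet> outer z"
  by (metis inner_transpose_transpose transpose_outer)

lemma mult_inner_outer: "((M::real^'p::finite^'n::finite) ** N) \<bullet> outer z = z \<bullet> (M *v (N *v z))"
  by (simp add: inner_outer matrix_vector_mul_assoc)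

lemma mat1_inner_outer: "mat 1 \<bullet> outer (z::real^'n::finite) = z \<bullet> z"
  by (simp add: inner_outer)

lemma dot_transpose: "(z::real^'n::finite) \<bullet> (transpose E *v v) = (E *v z) \<bullet> v"
  by (metis dot_lmul_matrix inner_commute transpose_matrix_vector)

lemma EtE_inner_outer: "(transpose E ** E) \<bullet> outer (z::real^'n::finite) = (E *v z) \<bullet> (E *v z)"
  by (simp only: mult_inner_outer dot_transpose)

lemma join_Inl [simp]: "join_vec u w $ Inl i = u $ i"
  and join_Inr [simp]: "join_vec u w $ Inr l = w $ l"
  by (simp_all add: join_vec_def)

lemma inner_join: "join_vec u w \<bullet> join_vec u' w' = u \<bullet> u' + w \<bullet> w'"
  by (simp add: inner_vec_def sum_plus_univ o_def)

lemma join_split: "z = join_vec (\<chi> i. z $ Inl i) (\<chi> l. z $ Inr l)"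
  by (simp add: vec_eq_iff join_vec_def split: sum.split)

lemma e1_mult: "e1 i1 $ i * a = (if i = i1 then a else 0)" "a * e1 i1 $ i = (if i = i1 then a else 0)"
  by (simp_all add: e1_def)

lemma mult_if0: "a * (if P then c else 0) = (if P then a*c else (0::real))"
  "(if P then c else 0) * a = (if P then c*a else (0::real))" by simp_all

lemma e1_inner: "e1 i1 \<bullet> u = u $ i1"
  by (simp add: inner_vec_def e1_mult mult_if0)

lemma Emat_join: "Emat i1 d B *v join_vec u w = transpose B *v w - (u $ i1) *\<^sub>R d"
  by (simp add: vec_eq_iff Emat_def matrix_vector_mult_def sum_plus_univ o_def transpose_def
      e1_mult mult_if0)

lemma g1_join: "g1 i1 \<bullet> join_vec u w = u $ i1"
  by (simp add: g1_def inner_join e1_inner)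

lemma outer_g1_join: "outer (g1 i1) \<bullet> outer (join_vec u w) = (u $ i1)^2"
  by (simp add: outer_outer g1_join)

lemma norm_join: "norm (join_vec u w)^2 = norm u ^2 + norm w^2"
  by (simp add: power2_norm_eq_inner inner_join)

lemma Gmat_entries:
  "Gmat i1 A F x $ Inl i $ Inl j = 0" "Gmat i1 A F x $ Inr l $ Inr l' = 0"
  "Gmat i1 A F x $ Inl i $ Inr l = F$l$i - (A *v x)$l * e1 i1 $ i"
  "Gmat i1 A F x $ Inr l $ Inl i = F$l$i - (A *v x)$l * e1 i1 $ i"
  by (simp_all add: Gmat_def Let_def)

lemma Gmat_join: "Gmat i1 A F x \<bullet> outer (join_vec u w) = 2 * (w \<bullet> (F *v u) - (w \<bullet> (A *v x)) * u $ i1)"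
proof -
  have "Gmat i1 A F x \<bullet> outer (join_vec u w) =
     (\<Sum>i\<in>UNIV. \<Sum>l\<in>UNIV. u$i * w$l * (F$l$i - (A *v x)$l * e1 i1 $ i))
   + (\<Sum>l\<in>UNIV. \<Sum>i\<in>UNIV. w$l * u$i * (F$l$i - (A *v x)$l * e1 i1 $ i))"
    by (simp add: inner_vec_def outer_def sum_plus_univ o_def Gmat_entries mult_ac)
  also have "\<dots> = 2 * (\<Sum>l\<in>UNIV. \<Sum>i\<in>UNIV. w$l * u$i * (F$l$i - (A *v x)$l * e1 i1 $ i))"
    by (subst sum.swap) (simp add: mult_ac)
  also have "\<dots> = 2 * (w \<bullet> (F *v u) - (w \<bullet> (A *v x)) * u $ i1)"
  proof -
    have "(\<Sum>i\<in>UNIV. w$l * u$i * (F$l$i - a * e1 i1 $ i)) =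
       w$l * (F *v u)$l - w$l * a * u$i1" for l a
      by (simp add: matrix_vector_mult_def right_diff_distrib sum_subtractf
        sum_distrib_left e1_mult mult_if0 mult_ac)
    then show ?thesis by (simp add: inner_vec_def sum_subtractf sum_distrib_right)
  qed
  finally show ?thesis .
qed

lemma inner_mono_nonneg:
  fixes w b c :: "real^'m::finite"
  assumes "\<forall>l. 0 \<le> w$l" "\<forall>l. b$l \<le> c$l"
  shows "w \<bullet> b \<le> w \<bullet> c"
  unfolding inner_vec_def using assms by (auto intro!: sum_mono mult_left_mono)

lemma inner_nonneg_vec:
  fixes w b :: "real^'m::finite"
  assumes "\<forall>l. 0 \<le> w$l" "\<forall>l. 0 \<le> b$l"
  shows "0 \<le> w \<bullet> b"
  unfolding inner_vec_def using assms by (auto intro!: sum_nonneg)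

lemma inner_Bmult: "(w::real^'m::finite) \<bullet> ((B::real^'n::finite^'m) *v y) = (transpose B *v w) \<bullet> y"
  by (simp add: dot_lmul_matrix)

lemma farkas:
  fixes B :: "real^'n2::finite^'m::finite" and b :: "real^'m" and d :: "real^'n2"
  assumes nf: "\<not>(\<exists>y. (\<forall>l. b$l \<le> (B *v y)$l) \<and> d \<bullet> y \<le> s)"
  shows "\<exists>w \<mu>. (\<forall>l. 0 \<le> w$l) \<and> 0 \<le> \<mu> \<and> transpose B *v w = \<mu> *\<^sub>R d \<and> \<mu> * s < w \<bullet> b"
proof -
  define G :: "((real^'m) \<times> real) set" where "G = range (\<lambda>j. (column j B, d$j)) \<union> range (\<lambda>j. (- column j B, - d$j))
      \<union> range (\<lambda>l. (- axis l 1, 0)) \<union> {(0,1)}"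
  define R :: "((real^'m) \<times> real) set" where
    "R = {(B *v y - p, d \<bullet> y + q) | y p q. (\<forall>l. 0 \<le> p$l) \<and> 0 \<le> q}"
  have Rmem: "(B *v y - p, d \<bullet> y + q) \<in> R" if "\<forall>l. 0 \<le> p$l" "0 \<le> q" for y p q
    unfolding R_def using that by blast
  have cR: "convex_cone R"
    unfolding convex_cone_def conic_def
  proof (intro conjI allI impI)
    show "R \<noteq> {}" proof -
      have "(B *v 0 - 0, d \<bullet> 0 + 0) \<in> R" by (rule Rmem) auto
      then show ?thesis by blast
    qed
    show "c *\<^sub>R x \<in> R" if "x \<in> R" "0 \<le> c" for x and c :: real
    proof -
      obtain y p q where x: "x = (B *v y - p, d \<bullet> y + q)" "\<forall>l. 0 \<le> p$l" "0 \<le> q"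
        using \<open>x \<in> R\<close> unfolding R_def by blast
      have "c *\<^sub>R x = (B *v (c *\<^sub>R y) - c *\<^sub>R p, d \<bullet> (c *\<^sub>R y) + c * q)"
        by (simp add: x algebra_simps)
      moreover have "\<forall>l. 0 \<le> (c *\<^sub>R p)$l" "0 \<le> c * q" using x that by auto
      ultimately show ?thesis using Rmem by metis
    qed
    show "convex R"
      unfolding convex_def
    proof (intro ballI allI impI)
      fix x z :: "(real^'m) \<times> real" and u v :: real
      assume "x \<in> R" "z \<in> R" "0 \<le> u" "0 \<le> v" "u + v = 1"
      obtain y p q where x: "x = (B *v y - p, d \<bullet> y + q)" "\<forall>l. 0 \<le> p$l" "0 \<le> q"
        using \<open>x \<in> R\<close> unfolding R_def by blast
      obtain y' p' q' where z: "z = (B *v y' - p', d \<bullet> y' + q')" "\<forall>l. 0 \<le> p'$l" "0 \<le> q'"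
        using \<open>z \<in> R\<close> unfolding R_def by blast
      have "u *\<^sub>R x + v *\<^sub>R z = (B *v (u *\<^sub>R y + v *\<^sub>R y') - (u *\<^sub>R p + v *\<^sub>R p'),
                 d \<bullet> (u *\<^sub>R y + v *\<^sub>R y') + (u * q + v * q'))"
        by (simp add: x z algebra_simps inner_add_right)
      moreover have "\<forall>l. 0 \<le> (u *\<^sub>R p + v *\<^sub>R p')$l" "0 \<le> u * q + v * q'"
        using x z \<open>0 \<le> u\<close> \<open>0 \<le> v\<close> by auto
      ultimately show "u *\<^sub>R x + v *\<^sub>R z \<in> R" using Rmem by metis
    qed
  qed
  have GR: "G \<subseteq> R"
  proof
    fix g assume "g \<in> G"
    then consider j where "g = (column j B, d$j)" | j where "g = (- column j B, - d$j)"
      | l where "g = (- axis l 1, 0)" | "g = (0,1)"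
      unfolding G_def by blast
    then show "g \<in> R"
    proof cases
      case (1 j)
      then have "g = (B *v axis j 1 - 0, d \<bullet> axis j 1 + 0)"
        by (simp add: matrix_vector_mult_basis inner_axis)
      then show ?thesis using Rmem[of 0 0] by (simp add: axis_def)
    next
      case (2 j)
      have e1: "B *v (- axis j 1) = - column j B"
        by (metis matrix_vector_mult_basis matrix_vector_mult_diff_distrib diff_0 matrix_vector_mult_0_right)
      have e2: "d \<bullet> (- axis j 1) = - d$j" by (simp add: inner_axis)
      show ?thesis using Rmem[of 0 0 "- axis j 1"] 2 e1 e2 by simp
    next
      case (3 l)
      then have "g = (B *v 0 - axis l 1, d \<bullet> 0 + 0)" by simp
      moreover have "\<forall>l'. 0 \<le> (axis l 1 :: real^'m)$l'" by (simp add: axis_def)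
      ultimately show ?thesis using Rmem[of "axis l 1" 0 0] by simp
    next
      case 4
      then show ?thesis using Rmem[of 0 1 0] by simp
    qed
  qed
  have hullR: "convex_cone hull G \<subseteq> R"
    by (rule hull_minimal[where S=convex_cone, OF GR cR])
  have bs: "(b, s) \<notin> R"
  proof
    assume "(b, s) \<in> R"
    then obtain y p q where "b = B *v y - p" "s = d \<bullet> y + q" "\<forall>l. 0 \<le> p$l" "0 \<le> q"
      unfolding R_def by blast
    then have "(\<forall>l. b$l \<le> (B *v y)$l) \<and> d \<bullet> y \<le> s" by auto
    with nf show False by blast
  qed
  have Gne: "G \<noteq> {}" unfolding G_def by blast
  have finG: "finite G" unfolding G_def by simp
  have hull_eq: "convex_cone hull G = conic hull (convex hull G)"
    by (rule convex_cone_hull_separate_nonempty[OF Gne])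
  have cl: "closed (convex_cone hull G)"
    unfolding hull_eq by (rule closed_conic_hull_strong) (use finG polytope_def in blast)
  have cv: "convex (convex_cone hull G)" by (rule convex_convex_cone_hull)
  obtain a \<beta> where a1: "inner a (b, s) < \<beta>" and a2: "\<forall>x\<in>convex_cone hull G. inner a x > \<beta>"
    using separating_hyperplane_closed_point[OF cv cl] bs hullR by blast
  have "0 \<in> convex_cone hull G" by (rule convex_cone_hull_contains_0)
  with a2 have bneg: "\<beta> < 0" by force
  have conicH: "conic (convex_cone hull G)"
    using convex_cone_convex_cone_hull[of G] unfolding convex_cone_def by blast
  have ag: "0 \<le> inner a g" if "g \<in> G" for g
  proof (rule ccontr)
    assume "\<not> 0 \<le> inner a g"
    then have neg: "inner a g < 0" by simp
    define c where "c = \<beta> / inner a g"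
    have "0 \<le> c" unfolding c_def using neg bneg by (simp add: divide_nonpos_neg)
    then have "c *\<^sub>R g \<in> convex_cone hull G"
      using conicH that hull_subset[of G convex_cone] unfolding conic_def by blast
    with a2 have "\<beta> < inner a (c *\<^sub>R g)" by blast
    also have "inner a (c *\<^sub>R g) = \<beta>" unfolding c_def using neg by simp
    finally show False by simp
  qed
  obtain w \<mu> where a: "a = (w, \<mu>)" by (cases a)
  have col: "w \<bullet> column j B + \<mu> * d$j = 0" for j
  proof -
    have "(column j B, d$j) \<in> G" "(- column j B, - d$j) \<in> G" unfolding G_def by auto
    from ag[OF this(1)] ag[OF this(2)] show ?thesis by (simp add: a)
  qed
  have wneg: "w$l \<le> 0" for l
  proof -
    have "(- axis l 1, 0) \<in> G" unfolding G_def by auto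
    from ag[OF this] show ?thesis by (simp add: a inner_axis)
  qed
  have mu: "0 \<le> \<mu>"
  proof -
    have "(0, 1) \<in> G" unfolding G_def by auto
    from ag[OF this] show ?thesis by (simp add: a)
  qed
  have "transpose B *v (- w) = \<mu> *\<^sub>R d"
  proof (rule vec_eq_iff[THEN iffD2, rule_format])
    fix j
    have "(transpose B *v (- w))$j = - (w \<bullet> column j B)"
      by (simp add: matrix_vector_mult_def transpose_def inner_vec_def column_def
          sum_negf mult.commute)
    then show "(transpose B *v (- w))$j = (\<mu> *\<^sub>R d)$j" using col[of j] by simp
  qed
  moreover have "\<mu> * s < (- w) \<bullet> b" using a1 bneg by (simp add: a)
  moreover have "\<forall>l. 0 \<le> (- w)$l" using wneg by simp
  ultimately show ?thesis using mu by blast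
qed

lemma mv_neg: "(M::real^'n::finite^'m::finite) *v (- v) = - (M *v v)"
  by (simp add: vec_eq_iff matrix_vector_mult_def sum_negf)

lemma choose_dir:
  fixes v b :: "real^'m::finite"
  assumes A4': "\<And>v. (\<forall>l. 0 \<le> v$l) \<Longrightarrow> transpose B *v v = 0 \<Longrightarrow> v \<bullet> b \<le> 0"
    and Bv: "transpose B *v v = 0" and vne: "v \<noteq> 0"
  shows "\<exists>v'. (v' = v \<or> v' = - v) \<and> 0 \<le> v' \<bullet> b \<and> (\<exists>l. v'$l < 0)"
proof (cases "0 \<le> v \<bullet> b")
  case True
  show ?thesis
  proof (cases "\<exists>l. v$l < 0")
    case True with \<open>0 \<le> v \<bullet> b\<close> show ?thesis by blast
  next
    case False
    then have nn: "\<forall>l. 0 \<le> v$l" by (simp add: not_less)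
    with A4' Bv have "v \<bullet> b \<le> 0" by blast
    with True have vb0: "(- v) \<bullet> b = 0" by simp
    obtain l where "v$l \<noteq> 0" using vne by (metis vec_eq_iff zero_index)
    with nn have "0 < v$l" by (metis order_le_less)
    then have "(- v)$l < 0" by simp
    with vb0 show ?thesis by (intro exI[of _ "- v"]) auto
  qed
next
  case False
  then have pos: "0 < (- v) \<bullet> b" by simp
  have "\<exists>l. (- v)$l < 0"
  proof (rule ccontr)
    assume "\<not> (\<exists>l. (- v)$l < 0)"
    then have "\<forall>l. 0 \<le> (- v)$l" by (simp add: not_less)
    moreover have "transpose B *v (- v) = 0"
      using Bv by (metis matrix_vector_mult_diff_distrib diff_0 matrix_vector_mult_0_right diff_self)
    ultimately have "(- v) \<bullet> b \<le> 0" using A4' by blast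
    with pos show False by simp
  qed
  with pos show ?thesis by (intro exI[of _ "- v"]) auto
qed

lemma extreme_exists:
  fixes B :: "real^'n2::finite^'m::finite" and b :: "real^'m" and d :: "real^'n2"
  assumes A4': "\<And>v. (\<forall>l. 0 \<le> v$l) \<Longrightarrow> transpose B *v v = 0 \<Longrightarrow> v \<bullet> b \<le> 0"
    and w0: "w0 \<in> dual_set B d" "s < w0 \<bullet> b"
  shows "\<exists>w. w extreme_point_of dual_set B d \<and> s < w \<bullet> b"
proof -
  have "\<forall>w. card {l. w$l \<noteq> 0} = n \<longrightarrow> w \<in> dual_set B d \<longrightarrow> s < w \<bullet> b \<longrightarrow>
          (\<exists>w. w extreme_point_of dual_set B d \<and> s < w \<bullet> b)" for n
  proof (induction n rule: less_induct)
    case (less n)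
    show ?case
    proof (intro allI impI)
      fix w :: "real^'m" assume cw: "card {l. w$l \<noteq> 0} = n" and wW: "w \<in> dual_set B d" and wb: "s < w \<bullet> b"
      have wnn: "\<forall>l. 0 \<le> w$l" and Bw: "transpose B *v w = d" using wW by (auto simp: dual_set_def)
      show "\<exists>w. w extreme_point_of dual_set B d \<and> s < w \<bullet> b"
      proof (cases "w extreme_point_of dual_set B d")
        case True with wb show ?thesis by blast
      next
        case False
        then obtain a c where aW: "a \<in> dual_set B d" and cW: "c \<in> dual_set B d"
          and seg: "w \<in> open_segment a c"
          using wW unfolding extreme_point_of_def by blast
        obtain \<theta> where th: "0 < \<theta>" "\<theta> < 1" "w = (1 - \<theta>) *\<^sub>R a + \<theta> *\<^sub>R c" and ac: "a \<noteq> c"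
          using seg by (auto simp: in_segment)
        have ann: "\<forall>l. 0 \<le> a$l" and Ba: "transpose B *v a = d" using aW by (auto simp: dual_set_def)
        have cnn: "\<forall>l. 0 \<le> c$l" using cW by (auto simp: dual_set_def)
        define v where "v = a - w"
        have vne: "v \<noteq> 0"
        proof
          assume "v = 0"
          then have "a = w" by (simp add: v_def)
          with th(3) have eq: "a = (1 - \<theta>) *\<^sub>R a + \<theta> *\<^sub>R c" by metis
          have "\<theta> *\<^sub>R (a - c) = a - ((1 - \<theta>) *\<^sub>R a + \<theta> *\<^sub>R c)" by (simp add: algebra_simps)
          also have "\<dots> = 0" by (metis eq diff_self)
          finally have "\<theta> *\<^sub>R (a - c) = 0" .
          with th ac show False by simp
        qed
        have supp: "w$l = 0 \<Longrightarrow> v$l = 0" for l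
        proof -
          assume "w$l = 0"
          then have "(1 - \<theta>) * a$l + \<theta> * c$l = 0" using th by simp
          moreover have "0 \<le> (1 - \<theta>) * a$l" "0 \<le> \<theta> * c$l" using th ann cnn by auto
          ultimately have "(1 - \<theta>) * a$l = 0" by linarith
          with th have "a$l = 0" by simp
          with \<open>w$l = 0\<close> show "v$l = 0" by (simp add: v_def)
        qed
        have Bv: "transpose B *v v = 0"
          unfolding v_def using Ba Bw by (simp only: matrix_vector_mult_diff_distrib) simp
        obtain v' where v': "v' = v \<or> v' = - v" "0 \<le> v' \<bullet> b" "\<exists>l. v'$l < 0"
          using choose_dir[OF A4' Bv vne] by blast
        have Bv': "transpose B *v v' = 0"
          using v'(1) Bv by (auto simp: mv_neg simp del: transpose_matrix_vector)
        have supp': "w$l = 0 \<Longrightarrow> v'$l = 0" for l using v'(1) supp by auto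
        define L where "L = {l. v'$l < 0}"
        have finL: "finite L" and Lne: "L \<noteq> {}" using v'(3) by (auto simp: L_def)
        define t where "t = Min ((\<lambda>l. w$l / (- v'$l)) ` L)"
        have "t \<in> (\<lambda>l. w$l / (- v'$l)) ` L" unfolding t_def using finL Lne by (intro Min_in) auto
        then obtain l0 where l0: "l0 \<in> L" "t = w$l0 / (- v'$l0)" by blast
        have tle: "t \<le> w$l / (- v'$l)" if "l \<in> L" for l
          unfolding t_def using finL that by (auto intro!: Min_le)
        have t0: "0 \<le> t"
        proof -
          have "v'$l0 < 0" using l0 by (simp add: L_def)
          then have "0 < - v'$l0" by simp
          with wnn have "0 \<le> w$l0 / (- v'$l0)" by (metis divide_nonneg_pos)
          with l0 show ?thesis by linarith
        qed
        define w' where "w' = w + t *\<^sub>R v'"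
        have w'nn: "\<forall>l. 0 \<le> w'$l"
        proof
          fix l show "0 \<le> w'$l"
          proof (cases "v'$l < 0")
            case True
            then have "t \<le> w$l / (- v'$l)" using tle by (auto simp: L_def)
            moreover have "0 < - v'$l" using True by simp
            ultimately have "t * (- v'$l) \<le> w$l" by (metis pos_le_divide_eq)
            then show ?thesis by (simp add: w'_def)
          next
            case False
            then show ?thesis using t0 wnn by (simp add: w'_def)
          qed
        qed
        have Bw': "transpose B *v w' = d"
          unfolding w'_def using Bw Bv' by (simp only: matrix_vector_right_distrib matrix_vector_mult_scaleR) simp
        have w'W: "w' \<in> dual_set B d" using w'nn Bw' by (simp add: dual_set_def)
        have w'b: "s < w' \<bullet> b"
        proof -
          have "0 \<le> t * (v' \<bullet> b)" using v'(2) t0 by simp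
          then show ?thesis using wb by (simp add: w'_def inner_add_left)
        qed
        have sub: "{l. w'$l \<noteq> 0} \<subset> {l. w$l \<noteq> 0}"
        proof
          show "{l. w'$l \<noteq> 0} \<subseteq> {l. w$l \<noteq> 0}" using supp' by (auto simp: w'_def)
          have "v'$l0 < 0" using l0 by (simp add: L_def)
          then have "w'$l0 = 0" using l0 by (simp add: w'_def field_simps)
          moreover have "w$l0 \<noteq> 0" using supp' \<open>v'$l0 < 0\<close> by force
          ultimately show "{l. w'$l \<noteq> 0} \<noteq> {l. w$l \<noteq> 0}" by blast
        qed
        have "card {l. w'$l \<noteq> 0} < card {l. w$l \<noteq> 0}"
          by (rule psubset_card_mono[OF _ sub]) simp
        then have "card {l. w'$l \<noteq> 0} < n" using cw by simp
        from less.IH[OF this, rule_format, OF refl w'W w'b] show ?thesis .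
      qed
    qed
  qed
  with w0 show ?thesis by blast
qed

lemma lp_dual:
  fixes B :: "real^'n2::finite^'m::finite" and b :: "real^'m" and d :: "real^'n2"
  assumes y0: "\<forall>l. b$l \<le> (B *v y0)$l"
    and ext: "\<And>w. w extreme_point_of dual_set B d \<Longrightarrow> w \<bullet> b \<le> s"
  shows "\<exists>y. (\<forall>l. b$l \<le> (B *v y)$l) \<and> d \<bullet> y \<le> s"
proof (rule ccontr)
  assume nf: "\<not> ?thesis"
  have A4': "v \<bullet> b \<le> 0" if "\<forall>l. 0 \<le> v$l" "transpose B *v v = 0" for v
  proof -
    have "v \<bullet> b \<le> v \<bullet> (B *v y0)" by (rule inner_mono_nonneg[OF that(1) y0])
    also have "\<dots> = 0" using that(2) by (simp only: inner_Bmult) simp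
    finally show ?thesis .
  qed
  obtain w \<mu> where w: "\<forall>l. 0 \<le> w$l" "0 \<le> \<mu>" "transpose B *v w = \<mu> *\<^sub>R d" "\<mu> * s < w \<bullet> b"
    using farkas[OF nf] by blast
  show False
  proof (cases "\<mu> = 0")
    case True
    with w have "w \<bullet> b \<le> 0" using A4'[of w] by simp
    with w True show False by simp
  next
    case False
    with w have mpos: "0 < \<mu>" by simp
    define w1 where "w1 = (1/\<mu>) *\<^sub>R w"
    have "w1 \<in> dual_set B d"
      using w mpos by (simp add: dual_set_def w1_def matrix_vector_mult_scaleR del: transpose_matrix_vector)
    moreover have "s < w1 \<bullet> b"
      using w(4) mpos by (simp add: w1_def field_simps)
    ultimately obtain we where "we extreme_point_of dual_set B d" "s < we \<bullet> b"
      using extreme_exists[OF A4'] by blast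
    with ext show False by force
  qed
qed

lemma prod_cone_iff: "z \<in> prod_cone Uh \<longleftrightarrow> (\<chi> i. z $ Inl i) \<in> Uh \<and> (\<forall>l. 0 \<le> z $ Inr l)"
proof
  assume "z \<in> prod_cone Uh"
  then obtain u w where "z = join_vec u w" "u \<in> Uh" "\<forall>l. 0 \<le> w$l" unfolding prod_cone_def by blast
  then show "(\<chi> i. z $ Inl i) \<in> Uh \<and> (\<forall>l. 0 \<le> z $ Inr l)" by simp
next
  assume "(\<chi> i. z $ Inl i) \<in> Uh \<and> (\<forall>l. 0 \<le> z $ Inr l)"
  then show "z \<in> prod_cone Uh" unfolding prod_cone_def
    by (subst join_split) force
qed

lemma join_in_prod_cone: "join_vec u w \<in> prod_cone Uh \<longleftrightarrow> u \<in> Uh \<and> (\<forall>l. 0 \<le> w $ l)"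
  by (simp add: prod_cone_iff)

lemma closed_prod_cone:
  assumes "closed Uh" shows "closed (prod_cone Uh :: (real^('k::finite+'m::finite)) set)"
proof -
  have "prod_cone Uh = {z::real^('k+'m). (\<chi> i. z $ Inl i) \<in> Uh} \<inter> (\<Inter>l. {z. 0 \<le> z $ Inr l})"
    by (auto simp: prod_cone_iff)
  moreover have "closed {z::real^('k+'m). (\<chi> i. z $ Inl i) \<in> Uh}"
  proof -
    have "continuous_on UNIV (\<lambda>z::real^('k+'m). (\<chi> i. z $ Inl i))"
      by (intro continuous_intros)
    then have "closed ((\<lambda>z::real^('k+'m). (\<chi> i. z $ Inl i)) -` Uh)"
      using assms by (simp add: continuous_on_closed_vimage closed_vimage)
    then show ?thesis by (simp add: vimage_def)
  qed
  moreover have "closed {z::real^('k+'m). 0 \<le> z $ Inr l}" for l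
    by (intro closed_Collect_le continuous_intros)
  ultimately show ?thesis by (metis closed_Int closed_INT)
qed

lemma cone_prod_cone:
  assumes "cone Uh" "z \<in> prod_cone Uh" "0 \<le> c"
  shows "c *\<^sub>R z \<in> prod_cone Uh"
proof -
  have "(\<chi> i. (c *\<^sub>R z) $ Inl i) = c *\<^sub>R (\<chi> i. z $ Inl i)" by (simp add: vec_eq_iff)
  with assms show ?thesis unfolding prod_cone_iff cone_def by auto
qed

lemma recession0:
  assumes cone: "cone Uh" and conv: "convex Uh" and U_ne: "unc_set i1 Uh \<noteq> {}"
    and U_compact: "compact (unc_set i1 Uh)" and u: "u \<in> Uh" "u $ i1 = 0"
  shows "u = 0"
proof (rule ccontr)
  assume une: "u \<noteq> 0"
  obtain u0 where u0: "u0 \<in> Uh" "u0 $ i1 = 1" using U_ne unfolding unc_set_def by blast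
  obtain M where M: "\<forall>v\<in>unc_set i1 Uh. norm v \<le> M"
    using compact_imp_bounded[OF U_compact] unfolding bounded_iff by blast
  have inU: "u0 + s *\<^sub>R u \<in> unc_set i1 Uh" if "0 \<le> s" for s
  proof -
    have "2 *\<^sub>R u0 \<in> Uh" "(2 * s) *\<^sub>R u \<in> Uh" using cone u0 u that unfolding cone_def by auto
    then have "(1/2) *\<^sub>R (2 *\<^sub>R u0) + (1/2) *\<^sub>R ((2 * s) *\<^sub>R u) \<in> Uh"
      by (intro convexD[OF conv]) auto
    then have "u0 + s *\<^sub>R u \<in> Uh" by simp
    then show ?thesis using u0 u by (simp add: unc_set_def)
  qed
  define s where "s = (M + norm u0 + 1) / norm u"
  have nu: "0 < norm u" using une by simp
  have "0 \<le> M" using M u0 inU[of 0] by (meson norm_ge_zero order_trans order_refl)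
  then have s0: "0 \<le> s" unfolding s_def using nu by simp
  have "norm (s *\<^sub>R u) \<le> norm (u0 + s *\<^sub>R u) + norm u0"
    using norm_triangle_ineq4[of "u0 + s *\<^sub>R u" u0] by simp
  also have "\<dots> \<le> M + norm u0" using M inU[OF s0] by simp
  finally have "s * norm u \<le> M + norm u0" using s0 by simp
  moreover have "s * norm u = M + norm u0 + 1" unfolding s_def using nu by simp
  ultimately show False by simp
qed

lemma transpose_Gmat: "transpose (Gmat i1 A F x) = Gmat i1 A F x"
  by (simp add: vec_eq_iff transpose_def Gmat_def Let_def split: sum.split)

lemma transpose_add': "transpose (X + Y) = transpose X + transpose (Y::real^'n::finite^'m::finite)"
  and transpose_diff': "transpose (X - Y) = transpose X - transpose Y"
  and transpose_scaleR': "transpose (c *\<^sub>R X) = c *\<^sub>R transpose X"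
  and transpose_neg': "transpose (- X) = - transpose X"
  and transpose_zero': "transpose (0::real^'n^'m) = 0"
  by (simp_all add: vec_eq_iff transpose_def)

lemma cop_symm: "transpose (cop_matrix i1 d A B F x lam Lam rho) = cop_matrix i1 d A B F x lam Lam rho"
  by (simp add: cop_matrix_def transpose_add' transpose_diff' transpose_scaleR' transpose_outer transpose_Gmat)

lemma matrix_add_rdistrib': "((A::real^'n::finite^'m::finite) + B) ** (C::real^'p::finite^'n) = A ** C + B ** C"
  by (simp add: vec_eq_iff matrix_matrix_mult_def sum.distrib algebra_simps)

lemma cop_affine:
  assumes "u + v = 1"
  shows "u *\<^sub>R cop_matrix i1 d A B F x l1 L1 r1 + v *\<^sub>R cop_matrix i1 d A B F x l2 L2 r2
       = cop_matrix i1 d A B F x (u * l1 + v * l2) (u *\<^sub>R L1 + v *\<^sub>R L2) (u * r1 + v * r2)"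
proof -
  define lin where "lin lam Lam rho = lam *\<^sub>R outer (g1 i1)
     + (1/2) *\<^sub>R (transpose (Lam ** Emat i1 d B) + Lam ** Emat i1 d B) + rho *\<^sub>R mat 1" for lam Lam rho
  have c: "cop_matrix i1 d A B F x lam Lam rho = lin lam Lam rho - (1/2) *\<^sub>R Gmat i1 A F x" for lam Lam rho
    unfolding cop_matrix_def lin_def by (simp add: algebra_simps)
  have e: "(u *\<^sub>R L1 + v *\<^sub>R L2) ** E = u *\<^sub>R (L1 ** E) + v *\<^sub>R (L2 ** E)" for E
    by (simp add: matrix_add_rdistrib' scalar_matrix_assoc)
  have l: "lin (u * l1 + v * l2) (u *\<^sub>R L1 + v *\<^sub>R L2) (u * r1 + v * r2) = u *\<^sub>R lin l1 L1 r1 + v *\<^sub>R lin l2 L2 r2"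
    unfolding lin_def e by (simp add: transpose_add' transpose_scaleR' algebra_simps)
  have "u *\<^sub>R (lin l1 L1 r1 - (1/2) *\<^sub>R Gmat i1 A F x) + v *\<^sub>R (lin l2 L2 r2 - (1/2) *\<^sub>R Gmat i1 A F x)
      = (u *\<^sub>R lin l1 L1 r1 + v *\<^sub>R lin l2 L2 r2) - (u + v) *\<^sub>R ((1/2) *\<^sub>R Gmat i1 A F x)"
    by (simp only: scaleR_diff_right scaleR_add_left) (simp add: algebra_simps)
  then show ?thesis unfolding c l using assms by simp
qed

lemma cop_mem: "M \<in> copositive K \<longleftrightarrow> transpose M = M \<and> (\<forall>z\<in>K. 0 \<le> M \<bullet> outer z)"
  by (simp add: copositive_def inner_outer)

lemma cop_convex: "convex (copositive K)"
  unfolding convex_def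
  by (auto simp: cop_mem transpose_add' transpose_scaleR' inner_add_left intro!: add_nonneg_nonneg)

lemma cop_scale: "N \<in> copositive K \<Longrightarrow> 0 \<le> s \<Longrightarrow> s *\<^sub>R N \<in> copositive K"
  by (auto simp: cop_mem transpose_scaleR')

lemma cop_zero: "0 \<in> copositive K"
  by (simp add: cop_mem transpose_zero')

lemma per_term:
  assumes cone: "cone Uh" and conv: "convex Uh" and U_ne: "unc_set i1 Uh \<noteq> {}"
    and U_compact: "compact (unc_set i1 Uh)" and orth: "\<forall>u\<in>Uh. 0 \<le> u $ i1"
    and bound: "\<forall>u\<in>unc_set i1 Uh. \<forall>w\<in>dual_set B d. w \<bullet> (F *v u - A *v x) \<le> t"
    and z: "z \<in> prod_cone Uh" "Emat i1 d B *v z = 0"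
  shows "Gmat i1 A F x \<bullet> outer z \<le> 2 * t * (g1 i1 \<bullet> z)^2"
proof -
  define u where "u = (\<chi> i. z $ Inl i)"
  define w where "w = (\<chi> l. z $ Inr l)"
  have zj: "z = join_vec u w" unfolding u_def w_def by (rule join_split)
  have uU: "u \<in> Uh" and wnn: "\<forall>l. 0 \<le> w$l" using z(1) unfolding zj join_in_prod_cone by auto
  have Bw: "transpose B *v w = u$i1 *\<^sub>R d"
    using z(2) unfolding zj Emat_join by (simp del: transpose_matrix_vector)
  have goal: "2 * (w \<bullet> (F *v u) - (w \<bullet> (A *v x)) * u $ i1) \<le> 2 * t * (u$i1)^2"
  proof (cases "u$i1 = 0")
    case True
    then have "u = 0" using recession0[OF cone conv U_ne U_compact uU] by simp
    then show ?thesis using True by simp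
  next
    case False
    with orth uU have pos: "0 < u$i1" by force
    define c where "c = u$i1"
    define u' where "u' = (1/c) *\<^sub>R u"
    define w' where "w' = (1/c) *\<^sub>R w"
    have "u' \<in> Uh" using cone uU pos unfolding u'_def c_def cone_def by simp
    moreover have "u' $ i1 = 1" using pos unfolding u'_def c_def by simp
    ultimately have u'U: "u' \<in> unc_set i1 Uh" by (simp add: unc_set_def)
    have "transpose B *v w' = d" unfolding w'_def using Bw pos
      by (simp add: matrix_vector_mult_scaleR c_def del: transpose_matrix_vector)
    moreover have "\<forall>l. 0 \<le> w'$l" using wnn pos by (simp add: w'_def c_def)
    ultimately have w'W: "w' \<in> dual_set B d" by (simp add: dual_set_def)
    have le: "w' \<bullet> (F *v u' - A *v x) \<le> t" using bound u'U w'W by blast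
    have eq: "w \<bullet> (F *v u) - (w \<bullet> (A *v x)) * u $ i1 = c^2 * (w' \<bullet> (F *v u' - A *v x))"
      using pos unfolding u'_def w'_def c_def
      by (simp add: matrix_vector_mult_scaleR inner_diff_right power2_eq_square field_simps)
    have "c^2 * (w' \<bullet> (F *v u' - A *v x)) \<le> c^2 * t"
      by (rule mult_left_mono[OF le]) simp
    then show ?thesis unfolding eq c_def by (simp add: mult_ac)
  qed
  show ?thesis unfolding zj Gmat_join g1_join using goal .
qed

lemma lin_zero: assumes "\<And>s::real. 0 \<le> a + s * b" shows "b = 0"
proof (rule ccontr)
  assume "b \<noteq> 0"
  have "0 \<le> a + (- (a + 1) / b) * b" by (rule assms)
  with \<open>b \<noteq> 0\<close> show False by simp
qed

lemma lin_nonneg: assumes "\<And>s::real. 0 \<le> s \<Longrightarrow> 0 \<le> a + s * b" shows "0 \<le> b"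
proof (rule ccontr)
  assume "\<not> 0 \<le> b"
  then have b: "b < 0" by simp
  have "0 \<le> (\<bar>a\<bar> + 1) / (- b)" using b by (intro divide_nonneg_pos) auto
  then have "0 \<le> a + ((\<bar>a\<bar> + 1) / (- b)) * b" by (rule assms)
  also have "((\<bar>a\<bar> + 1) / (- b)) * b = - (\<bar>a\<bar> + 1)" using b by (simp add: field_simps)
  finally show False by linarith
qed

lemma outer_scale: "outer (c *\<^sub>R z) = (c^2) *\<^sub>R outer (z::real^'n::finite)"
  by (simp add: vec_eq_iff outer_def power2_eq_square mult_ac)

lemma outer_zero: "outer (0::real^'n::finite) = 0"
  by (simp add: vec_eq_iff outer_def)

lemma continuous_outer: "continuous_on S (outer :: real^'n::finite \<Rightarrow> _)"
  unfolding outer_def by (intro continuous_intros)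

lemma ZCM: "Z \<bullet> cop_matrix i1 d A B F x lam Lam rho =
   lam * (Z \<bullet> outer (g1 i1)) - (1/2) * (Z \<bullet> Gmat i1 A F x)
   + (1/2) * (Z \<bullet> transpose (Lam ** Emat i1 d B) + Z \<bullet> (Lam ** Emat i1 d B)) + rho * (Z \<bullet> mat 1)"
  by (simp add: cop_matrix_def inner_add_right inner_diff_right)

lemma transpose_zero_neg: "transpose 0 = - (0::real^'n::finite^'m::finite)"
  by (simp add: transpose_zero')

lemma dual_feasible:
  fixes i1 :: "'k::finite" and Uh :: "(real^'k) set" and d :: "real^'n2::finite"
    and A :: "real^'n1::finite^'m::finite" and B :: "real^'n2^'m" and F :: "real^'k^'m"
    and x :: "real^'n1" and t r \<epsilon> :: real
  assumes cone: "cone Uh" and conv: "convex Uh" and Uh_closed: "closed Uh"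
    and U_ne: "unc_set i1 Uh \<noteq> {}" and U_compact: "compact (unc_set i1 Uh)"
    and orth: "\<forall>u\<in>Uh. 0 \<le> u $ i1"
    and bound: "\<forall>u\<in>unc_set i1 Uh. \<forall>w\<in>dual_set B d. w \<bullet> (F *v u - A *v x) \<le> t"
    and eps: "0 < \<epsilon>"
  shows "\<exists>lam Lam rho. 0 \<le> rho \<and>
     cop_matrix i1 d A B F x lam Lam rho \<in> copositive (prod_cone Uh :: (real^('k+'m)) set) \<and>
     lam + r * rho \<le> t + \<epsilon>"
proof (rule ccontr)
  assume H: "\<not> ?thesis"
  define K where "K = (prod_cone Uh :: (real^('k+'m)) set)"
  define CM where "CM = cop_matrix i1 d A B F x"
  define P1 where "P1 = outer (g1 i1 :: real^('k+'m))"
  define G0 where "G0 = Gmat i1 A F x"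
  define E where "E = Emat i1 d B"
  define S :: "(real \<times> (real^('k+'m)^('k+'m))) set" where
    "S = {(lam + r * rho + \<sigma> - (t + \<epsilon>), CM lam Lam rho - N + Q) | lam Lam rho \<sigma> N Q.
            0 \<le> rho \<and> 0 \<le> \<sigma> \<and> N \<in> copositive K \<and> transpose Q = - Q}"
  have Smem: "(lam + r * rho + \<sigma> - (t + \<epsilon>), CM lam Lam rho - N + Q) \<in> S"
    if "0 \<le> rho" "0 \<le> \<sigma>" "N \<in> copositive K" "transpose Q = - Q" for lam Lam rho \<sigma> N Q
    unfolding S_def using that by blast
  have S0: "0 \<notin> S"
  proof
    assume "0 \<in> S"
    then obtain lam Lam rho \<sigma> N Q where eq: "0 = (lam + r * rho + \<sigma> - (t + \<epsilon>), CM lam Lam rho - N + Q)"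
      and p: "0 \<le> rho" "0 \<le> \<sigma>" "N \<in> copositive K" "transpose Q = - Q"
      unfolding S_def by blast
    from eq have e1: "lam + r * rho + \<sigma> = t + \<epsilon>" and e2: "Q = N - CM lam Lam rho"
      by (simp_all add: zero_prod_def algebra_simps)
    have "transpose Q = Q"
      using p(3) unfolding e2 CM_def by (simp add: transpose_diff' cop_symm cop_mem)
    with p(4) have "Q = - Q" by simp
    then have "Q = 0" by (simp add: vec_eq_iff)
    with e2 have "CM lam Lam rho = N" by simp
    with p e1 H show False unfolding CM_def K_def by force
  qed
  have convS: "convex S"
    unfolding convex_def
  proof (intro ballI allI impI)
    fix p1 p2 and u v :: real
    assume p1: "p1 \<in> S" and p2: "p2 \<in> S" and uv: "0 \<le> u" "0 \<le> v" "u + v = 1"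
    obtain l1 L1 r1 s1 N1 Q1 where p1e: "p1 = (l1 + r * r1 + s1 - (t + \<epsilon>), CM l1 L1 r1 - N1 + Q1)"
      and c1: "0 \<le> r1" "0 \<le> s1" "N1 \<in> copositive K" "transpose Q1 = - Q1"
      using p1 unfolding S_def by blast
    obtain l2 L2 r2 s2 N2 Q2 where p2e: "p2 = (l2 + r * r2 + s2 - (t + \<epsilon>), CM l2 L2 r2 - N2 + Q2)"
      and c2: "0 \<le> r2" "0 \<le> s2" "N2 \<in> copositive K" "transpose Q2 = - Q2"
      using p2 unfolding S_def by blast
    have v: "v = 1 - u" using uv by simp
    have eq: "u *\<^sub>R p1 + v *\<^sub>R p2 = ((u * l1 + v * l2) + r * (u * r1 + v * r2) + (u * s1 + v * s2) - (t + \<epsilon>),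
        CM (u * l1 + v * l2) (u *\<^sub>R L1 + v *\<^sub>R L2) (u * r1 + v * r2) - (u *\<^sub>R N1 + v *\<^sub>R N2) + (u *\<^sub>R Q1 + v *\<^sub>R Q2))"
    proof (rule prod_eqI)
      show "fst (u *\<^sub>R p1 + v *\<^sub>R p2) = fst ((u * l1 + v * l2) + r * (u * r1 + v * r2) + (u * s1 + v * s2) - (t + \<epsilon>),
        CM (u * l1 + v * l2) (u *\<^sub>R L1 + v *\<^sub>R L2) (u * r1 + v * r2) - (u *\<^sub>R N1 + v *\<^sub>R N2) + (u *\<^sub>R Q1 + v *\<^sub>R Q2))"
        unfolding p1e p2e v by (simp add: algebra_simps)
      have "u *\<^sub>R (CM l1 L1 r1 - N1 + Q1) + v *\<^sub>R (CM l2 L2 r2 - N2 + Q2)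
          = (u *\<^sub>R CM l1 L1 r1 + v *\<^sub>R CM l2 L2 r2) - (u *\<^sub>R N1 + v *\<^sub>R N2) + (u *\<^sub>R Q1 + v *\<^sub>R Q2)"
        by (simp add: algebra_simps)
      also have "u *\<^sub>R CM l1 L1 r1 + v *\<^sub>R CM l2 L2 r2 = CM (u * l1 + v * l2) (u *\<^sub>R L1 + v *\<^sub>R L2) (u * r1 + v * r2)"
        unfolding CM_def by (rule cop_affine[OF uv(3)])
      finally show "snd (u *\<^sub>R p1 + v *\<^sub>R p2) = snd ((u * l1 + v * l2) + r * (u * r1 + v * r2) + (u * s1 + v * s2) - (t + \<epsilon>),
        CM (u * l1 + v * l2) (u *\<^sub>R L1 + v *\<^sub>R L2) (u * r1 + v * r2) - (u *\<^sub>R N1 + v *\<^sub>R N2) + (u *\<^sub>R Q1 + v *\<^sub>R Q2))"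
        unfolding p1e p2e by simp
    qed
    have "0 \<le> u * r1 + v * r2" "0 \<le> u * s1 + v * s2" using uv c1 c2 by auto
    moreover have "u *\<^sub>R N1 + v *\<^sub>R N2 \<in> copositive K"
      using cop_convex c1(3) c2(3) uv by (rule convexD)
    moreover have "transpose (u *\<^sub>R Q1 + v *\<^sub>R Q2) = - (u *\<^sub>R Q1 + v *\<^sub>R Q2)"
      using c1(4) c2(4) by (simp add: transpose_add' transpose_scaleR')
    ultimately show "u *\<^sub>R p1 + v *\<^sub>R p2 \<in> S" unfolding eq by (rule Smem)
  qed
  obtain a where a0: "a \<noteq> 0" and aS: "\<forall>y\<in>S. 0 \<le> inner a y"
    using separating_hyperplane_set_0[OF convS S0] by blast
  obtain \<alpha> Z where aZ: "a = (\<alpha>, Z)" by (cases a)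
  have key: "0 \<le> \<alpha> * (lam + r * rho + \<sigma> - (t + \<epsilon>)) + (lam * (Z \<bullet> P1) - (1/2) * (Z \<bullet> G0)
       + (1/2) * (Z \<bullet> transpose (Lam ** E) + Z \<bullet> (Lam ** E)) + rho * (Z \<bullet> mat 1)) - Z \<bullet> N + Z \<bullet> Q"
    if "0 \<le> rho" "0 \<le> \<sigma>" "N \<in> copositive K" "transpose Q = - Q" for lam Lam rho \<sigma> N Q
    using aS Smem[OF that, of lam Lam] unfolding aZ CM_def P1_def G0_def E_def
    by (force simp: ZCM inner_add_right inner_diff_right)
  define C0 where "C0 = \<alpha> * (- (t + \<epsilon>)) - (1/2) * (Z \<bullet> G0)"
  have key0: "0 \<le> C0 + \<alpha> * (lam + r * rho + \<sigma>) + (lam * (Z \<bullet> P1)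
       + (1/2) * (Z \<bullet> transpose (Lam ** E) + Z \<bullet> (Lam ** E)) + rho * (Z \<bullet> mat 1)) - Z \<bullet> N + Z \<bullet> Q"
    if "0 \<le> rho" "0 \<le> \<sigma>" "N \<in> copositive K" "transpose Q = - Q" for lam Lam rho \<sigma> N Q
    using key[OF that, of lam Lam] unfolding C0_def by (simp add: algebra_simps)
  have fQ: "Z \<bullet> Q0 = 0" if "transpose Q0 = - Q0" for Q0
  proof (rule lin_zero[where a=C0])
    fix s :: real
    have "transpose (s *\<^sub>R Q0) = - (s *\<^sub>R Q0)" using that by (simp add: transpose_scaleR')
    from key0[where lam=0 and Lam=0 and rho=0 and \<sigma>=0 and N=0 and Q="s *\<^sub>R Q0", OF order_refl order_refl cop_zero this] show "0 \<le> C0 + s * (Z \<bullet> Q0)"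
      by (simp add: transpose_zero')
  qed
  have Zsym: "transpose Z = Z"
  proof -
    have "transpose (Z - transpose Z) = - (Z - transpose Z)" by (simp add: transpose_diff')
    then have z0: "Z \<bullet> (Z - transpose Z) = 0" by (rule fQ)
    have "(Z - transpose Z) \<bullet> (Z - transpose Z) = 2 * (Z \<bullet> (Z - transpose Z))"
      using inner_transpose_transpose[of Z Z]
      by (simp add: inner_diff_left inner_diff_right inner_commute)
    then have "(Z - transpose Z) \<bullet> (Z - transpose Z) = 0" using z0 by simp
    then show ?thesis by simp
  qed
  have fC: "0 \<le> C0"
    using key0[where lam=0 and Lam=0 and rho=0 and \<sigma>=0 and N=0 and Q=0, OF order_refl order_refl cop_zero transpose_zero_neg] by (simp add: transpose_zero')
  have fsig: "0 \<le> \<alpha>"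
  proof (rule lin_nonneg[where a=C0])
    fix s :: real assume "0 \<le> s"
    from key0[where lam=0 and Lam=0 and rho=0 and \<sigma>=s and N=0 and Q=0, OF order_refl this cop_zero transpose_zero_neg] show "0 \<le> C0 + s * \<alpha>"
      by (simp add: transpose_zero' mult.commute)
  qed
  have flam: "\<alpha> + Z \<bullet> P1 = 0"
  proof (rule lin_zero[where a=C0])
    fix s :: real
    from key0[where lam=s and Lam=0 and rho=0 and \<sigma>=0 and N=0 and Q=0, OF order_refl order_refl cop_zero transpose_zero_neg] show "0 \<le> C0 + s * (\<alpha> + Z \<bullet> P1)"
      by (simp add: transpose_zero' algebra_simps)
  qed
  have ETE: "transpose (transpose E ** E) = transpose E ** E"
    by (simp add: matrix_transpose_mul)
  have fLam: "Z \<bullet> (transpose E ** E) = 0"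
  proof (rule lin_zero[where a=C0])
    fix s :: real
    have m: "(s *\<^sub>R transpose E) ** E = s *\<^sub>R (transpose E ** E)" by (simp add: scalar_matrix_assoc)
    from key0[where lam=0 and Lam="s *\<^sub>R transpose E" and rho=0 and \<sigma>=0 and N=0 and Q=0, OF order_refl order_refl cop_zero transpose_zero_neg]
    show "0 \<le> C0 + s * (Z \<bullet> (transpose E ** E))"
      by (simp add: transpose_zero' m transpose_scaleR' ETE algebra_simps)
  qed
  have frho: "0 \<le> \<alpha> * r + Z \<bullet> mat 1"
  proof (rule lin_nonneg[where a=C0])
    fix s :: real assume "0 \<le> s"
    from key0[where lam=0 and Lam=0 and rho=s and \<sigma>=0 and N=0 and Q=0, OF this order_refl cop_zero transpose_zero_neg] show "0 \<le> C0 + s * (\<alpha> * r + Z \<bullet> mat 1)"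
      by (simp add: transpose_zero' algebra_simps)
  qed
  have fN: "Z \<bullet> N0 \<le> 0" if "N0 \<in> copositive K" for N0
  proof -
    have "0 \<le> - (Z \<bullet> N0)"
    proof (rule lin_nonneg[where a=C0])
      fix s :: real assume "0 \<le> s"
      from key0[where lam=0 and Lam=0 and rho=0 and \<sigma>=0 and N="s *\<^sub>R N0" and Q=0, OF order_refl order_refl cop_scale[OF that this] transpose_zero_neg]
      show "0 \<le> C0 + s * (- (Z \<bullet> N0))"
        by (simp add: algebra_simps transpose_zero')
    qed
    then show ?thesis by simp
  qed
  define Y where "Y = - Z"
  have Ysym: "transpose Y = Y" using Zsym by (simp add: Y_def transpose_neg')
  define Sph where "Sph = outer ` (K \<inter> sphere 0 1)"
  define CPc where "CPc = conic hull (convex hull Sph)"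
  have Kcone: "c *\<^sub>R z \<in> K" if "z \<in> K" "0 \<le> c" for z c
    using cone_prod_cone[OF cone] that unfolding K_def by blast
  obtain u0 where u0: "u0 \<in> Uh" "u0 $ i1 = 1" using U_ne unfolding unc_set_def by blast
  define z0 where "z0 = join_vec u0 (0::real^'m)"
  have z0K: "z0 \<in> K" by (simp add: K_def z0_def join_in_prod_cone u0)
  have z0ne: "z0 \<noteq> 0"
  proof
    assume "z0 = 0"
    then have "z0 $ Inl i1 = 0" by simp
    then show False using u0 by (simp add: z0_def)
  qed
  have "(1 / norm z0) *\<^sub>R z0 \<in> K \<inter> sphere 0 1"
    using Kcone[OF z0K] z0ne by simp
  then have Sphne: "Sph \<noteq> {}" unfolding Sph_def by blast
  have closedK: "closed K" unfolding K_def by (rule closed_prod_cone[OF Uh_closed])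
  have "compact (K \<inter> sphere 0 1)" using closedK by (intro closed_Int_compact compact_sphere)
  then have cSph: "compact Sph" unfolding Sph_def by (rule compact_continuous_image[OF continuous_outer])
  have hyp: "convex hull Sph \<subseteq> {X. mat 1 \<bullet> X = 1}"
  proof (rule hull_minimal)
    show "Sph \<subseteq> {X. mat 1 \<bullet> X = 1}"
      unfolding Sph_def by (auto simp: mat1_inner_outer dot_square_norm)
    show "convex {X. mat 1 \<bullet> X = (1::real)}" by (rule convex_hyperplane)
  qed
  have n0: "0 \<notin> convex hull Sph" using hyp by auto
  have clCP: "closed CPc" unfolding CPc_def
    by (rule closed_conic_hull) (use compact_convex_hull[OF cSph] n0 in blast)
  have cvCP: "convex CPc" unfolding CPc_def by (rule convex_conic_hull[OF convex_convex_hull])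
  have cnCP: "conic CPc" unfolding CPc_def by (rule conic_conic_hull)
  have zCP: "0 \<in> CPc" unfolding CPc_def using Sphne by simp
  have outerCP: "outer z \<in> CPc" if "z \<in> K" for z
  proof (cases "z = 0")
    case True then show ?thesis using zCP by (simp add: outer_zero)
  next
    case False
    define z1 where "z1 = (1 / norm z) *\<^sub>R z"
    have "z1 \<in> K \<inter> sphere 0 1" using Kcone[OF that] False by (simp add: z1_def)
    then have "outer z1 \<in> CPc" unfolding CPc_def Sph_def
      by (meson hull_subset image_eqI subsetD conic_hull_subset_convex_cone_hull)
    moreover have "outer z = (norm z)^2 *\<^sub>R outer z1"
      using False by (simp add: z1_def outer_scale power_one_over)
    ultimately show ?thesis using cnCP unfolding conic_def by simp
  qed
  have YCP: "Y \<in> CPc"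
  proof (rule ccontr)
    assume "Y \<notin> CPc"
    then obtain H \<beta> where h1: "H \<bullet> Y < \<beta>" and h2: "\<forall>X\<in>CPc. \<beta> < H \<bullet> X"
      using separating_hyperplane_closed_point[OF cvCP clCP] by blast
    have b0: "\<beta> < 0" using h2 zCP by force
    have Hpos: "0 \<le> H \<bullet> X" if "X \<in> CPc" for X
    proof (rule lin_nonneg[where a="- \<beta>"])
      fix s :: real assume "0 \<le> s"
      then have "s *\<^sub>R X \<in> CPc" using cnCP that unfolding conic_def by blast
      with h2 have "\<beta> < H \<bullet> (s *\<^sub>R X)" by blast
      then show "0 \<le> - \<beta> + s * (H \<bullet> X)" by simp
    qed
    define Hs where "Hs = H + transpose H"
    have "Hs \<in> copositive K"
      unfolding cop_mem
    proof
      show "transpose Hs = Hs" by (simp add: Hs_def transpose_add')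
      show "\<forall>z\<in>K. 0 \<le> Hs \<bullet> outer z"
        using Hpos outerCP by (simp add: Hs_def inner_add_left transpose_inner_outer)
    qed
    then have "Z \<bullet> Hs \<le> 0" by (rule fN)
    then have "0 \<le> Y \<bullet> Hs" by (simp add: Y_def)
    moreover have "Y \<bullet> transpose H = Y \<bullet> H"
      using inner_transpose_transpose[of Y "transpose H"] Ysym by simp
    ultimately have "0 \<le> H \<bullet> Y" by (simp add: Hs_def inner_add_right inner_commute)
    with h1 b0 show False by simp
  qed
  obtain c X0 where c: "0 \<le> c" "Y = c *\<^sub>R X0" "X0 \<in> convex hull Sph"
    using YCP unfolding CPc_def conic_hull_explicit by blast
  obtain T \<mu> where T: "finite T" "T \<subseteq> Sph" "\<forall>X\<in>T. 0 \<le> \<mu> X" "sum \<mu> T = 1"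
      "(\<Sum>X\<in>T. \<mu> X *\<^sub>R X) = X0"
    using c(3) unfolding convex_hull_explicit by blast
  have "\<forall>X\<in>T. \<exists>z. z \<in> K \<inter> sphere 0 1 \<and> X = outer z" using T(2) unfolding Sph_def by blast
  then obtain zf where zf: "\<forall>X\<in>T. zf X \<in> K \<inter> sphere 0 1 \<and> X = outer (zf X)" by metis
  have Ylin: "Y \<bullet> M = (\<Sum>X\<in>T. c * \<mu> X * (M \<bullet> outer (zf X)))" for M
  proof -
    have "Y \<bullet> M = (\<Sum>X\<in>T. c * \<mu> X * (X \<bullet> M))"
      by (simp add: c(2) T(5)[symmetric] inner_sum_left sum_distrib_left mult.assoc)
    also have "\<dots> = (\<Sum>X\<in>T. c * \<mu> X * (M \<bullet> outer (zf X)))"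
    proof (rule sum.cong[OF refl])
      fix X assume "X \<in> T"
      then have "X = outer (zf X)" using zf by blast
      then show "c * \<mu> X * (X \<bullet> M) = c * \<mu> X * (M \<bullet> outer (zf X))" by (metis inner_commute)
    qed
    finally show ?thesis .
  qed
  have cm: "0 \<le> c * \<mu> X" if "X \<in> T" for X using c(1) T(3) that by simp
  have zK: "zf X \<in> K" and zn: "norm (zf X) = 1" if "X \<in> T" for X using zf that by auto
  have fa: "\<alpha> = (\<Sum>X\<in>T. c * \<mu> X * (g1 i1 \<bullet> zf X)^2)"
  proof -
    have "\<alpha> = Y \<bullet> P1" using flam by (simp add: Y_def)
    also have "\<dots> = (\<Sum>X\<in>T. c * \<mu> X * (P1 \<bullet> outer (zf X)))" by (rule Ylin)
    also have "\<dots> = (\<Sum>X\<in>T. c * \<mu> X * (g1 i1 \<bullet> zf X)^2)" by (simp add: P1_def outer_outer)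
    finally show ?thesis .
  qed
  have "(\<Sum>X\<in>T. c * \<mu> X * ((E *v zf X) \<bullet> (E *v zf X))) = 0"
  proof -
    have "Y \<bullet> (transpose E ** E) = 0" using fLam by (simp add: Y_def)
    then show ?thesis unfolding Ylin[of "transpose E ** E"] EtE_inner_outer .
  qed
  moreover have nn: "\<And>X. X \<in> T \<Longrightarrow> 0 \<le> c * \<mu> X * ((E *v zf X) \<bullet> (E *v zf X))"
    using cm by (metis inner_ge_zero mult_nonneg_nonneg)
  ultimately have Ez: "\<forall>X\<in>T. c * \<mu> X * ((E *v zf X) \<bullet> (E *v zf X)) = 0"
    using sum_nonneg_eq_0_iff[OF T(1) nn] by simp
  have fc: "Y \<bullet> mat 1 = c"
  proof -
    have "Y \<bullet> mat 1 = (\<Sum>X\<in>T. c * \<mu> X)"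
      unfolding Ylin by (intro sum.cong refl) (simp add: mat1_inner_outer dot_square_norm zn)
    also have "\<dots> = c" using T(4) by (simp add: sum_distrib_left[symmetric])
    finally show ?thesis .
  qed
  have cle: "c \<le> \<alpha> * r" using frho fc by (simp add: Y_def)
  have fG: "Y \<bullet> G0 \<le> 2 * t * \<alpha>"
  proof -
    have "Y \<bullet> G0 = (\<Sum>X\<in>T. c * \<mu> X * (G0 \<bullet> outer (zf X)))" by (rule Ylin)
    also have "\<dots> \<le> (\<Sum>X\<in>T. c * \<mu> X * (2 * t * (g1 i1 \<bullet> zf X)^2))"
    proof (rule sum_mono)
      fix X assume X: "X \<in> T"
      show "c * \<mu> X * (G0 \<bullet> outer (zf X)) \<le> c * \<mu> X * (2 * t * (g1 i1 \<bullet> zf X)^2)"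
      proof (cases "c * \<mu> X = 0")
        case True then show ?thesis by (simp only: mult_zero_left order_refl)
      next
        case False
        have "c * \<mu> X * ((E *v zf X) \<bullet> (E *v zf X)) = 0" using Ez X by blast
        with False have "(E *v zf X) \<bullet> (E *v zf X) = 0" by simp
        then have "E *v zf X = 0" by simp
        then have Ez0: "Emat i1 d B *v zf X = 0" by (simp add: E_def)
        have zP: "zf X \<in> prod_cone Uh" using zK[OF X] by (simp add: K_def)
        have "Gmat i1 A F x \<bullet> outer (zf X) \<le> 2 * t * (g1 i1 \<bullet> zf X)^2"
          by (rule per_term[OF cone conv U_ne U_compact orth bound zP Ez0])
        then have "G0 \<bullet> outer (zf X) \<le> 2 * t * (g1 i1 \<bullet> zf X)^2" by (simp add: G0_def)
        then show ?thesis using cm[OF X] by (rule mult_left_mono)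
      qed
    qed
    also have "\<dots> = 2 * t * \<alpha>" unfolding fa by (simp add: sum_distrib_left mult_ac)
    finally show ?thesis .
  qed
  have "\<alpha> * (t + \<epsilon>) \<le> (1/2) * (Y \<bullet> G0)" using fC by (simp add: C0_def Y_def algebra_simps)
  with fG have "\<alpha> * \<epsilon> \<le> 0" by (simp add: algebra_simps)
  with fsig eps have al: "\<alpha> = 0" by (simp add: mult_le_0_iff)
  with cle c(1) have "c = 0" by simp
  then have "Y = 0" using c(2) by simp
  then have "Z = 0" by (simp add: Y_def)
  with al a0 aZ show False by (simp add: zero_prod_def)
qed

lemma cop_eval:
  assumes "transpose B *v w = d" "u $ i1 = 1"
  shows "cop_matrix i1 d A B F x lam Lam rho \<bullet> outer (join_vec u w) =
     lam - (w \<bullet> (F *v u) - w \<bullet> (A *v x)) + rho * (norm u ^ 2 + norm w ^ 2)"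
proof -
  have Ez: "Emat i1 d B *v join_vec u w = 0"
    using assms by (simp add: Emat_join del: transpose_matrix_vector)
  have l1: "(Lam ** Emat i1 d B) \<bullet> outer (join_vec u w) = 0"
    by (simp add: mult_inner_outer Ez)
  have l2: "transpose (Lam ** Emat i1 d B) \<bullet> outer (join_vec u w) = 0"
    by (simp add: transpose_inner_outer l1)
  have l3: "mat 1 \<bullet> outer (join_vec u w) = norm u ^ 2 + norm w ^ 2"
    by (simp add: mat1_inner_outer inner_join power2_norm_eq_inner)
  show ?thesis
    unfolding cop_matrix_def
    by (simp add: inner_add_left inner_diff_left l1 l2 l3 Gmat_join outer_g1_join assms field_simps)
qed

theorem theorem1:
  fixes X :: "(real^'n1) set" and c :: "real^'n1" and d :: "real^'n2"
    and A :: "real^'n1^'m" and B :: "real^'n2^'m" and F :: "real^'k^'m"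
    and Uh :: "(real^'k) set" and i1 :: 'k and r :: real
  assumes X_closed: "closed X" and X_convex: "convex X"
    and Uh_closed: "closed Uh" and Uh_convex: "convex Uh" and Uh_cone: "cone Uh"
    and Uh_full: "interior Uh \<noteq> {}"
    and Uh_orthant: "\<forall>u\<in>Uh. 0 \<le> u $ i1"
    and U_ne: "unc_set i1 Uh \<noteq> {}" and U_compact: "compact (unc_set i1 Uh)"
    and A2: "\<exists>x y. x \<in> X \<and> (\<forall>u\<in>unc_set i1 Uh. \<forall>l. (A *v x + B *v y u) $ l \<ge> (F *v u) $ l)"
    and A3: "\<bar>rlp_value X c d A B F (unc_set i1 Uh)\<bar> \<noteq> \<infinity>"
    and A4: "\<forall>x\<in>X. \<forall>u\<in>unc_set i1 Uh. \<exists>y. \<forall>l. (B *v y) $ l \<ge> (F *v u - A *v x) $ l"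
    and r_pos: "r > 0"
    and r_bound: "\<forall>u\<in>unc_set i1 Uh. \<forall>w. w extreme_point_of dual_set B d \<longrightarrow>
                    norm u ^ 2 + norm w ^ 2 \<le> r"
  shows "rlp_bar_value i1 X c d A B F Uh r = rlp_value X c d A B F (unc_set i1 Uh)"
proof (rule antisym)
  let ?U = "unc_set i1 Uh"
  show "rlp_bar_value i1 X c d A B F Uh r \<le> rlp_value X c d A B F ?U"
    unfolding rlp_value_def
  proof (rule Inf_greatest)
    fix e assume "e \<in> {ereal (c \<bullet> x) + (SUP u\<in>?U. ereal (d \<bullet> y u)) | x y.
            x \<in> X \<and> (\<forall>u\<in>?U. \<forall>l. (A *v x + B *v y u) $ l \<ge> (F *v u) $ l)}"
    then obtain x y where e: "e = ereal (c \<bullet> x) + (SUP u\<in>?U. ereal (d \<bullet> y u))"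
      and xX: "x \<in> X" and feas: "\<forall>u\<in>?U. \<forall>l. (A *v x + B *v y u) $ l \<ge> (F *v u) $ l"
      by blast
    show "rlp_bar_value i1 X c d A B F Uh r \<le> e"
    proof (cases "(SUP u\<in>?U. ereal (d \<bullet> y u)) = \<infinity>")
      case True then show ?thesis by (simp add: e)
    next
      case False
      obtain u1 where u1: "u1 \<in> ?U" using U_ne by blast
      have "ereal (d \<bullet> y u1) \<le> (SUP u\<in>?U. ereal (d \<bullet> y u))" using u1 by (rule SUP_upper)
      then have "(SUP u\<in>?U. ereal (d \<bullet> y u)) \<noteq> -\<infinity>" by auto
      with False obtain t where t: "(SUP u\<in>?U. ereal (d \<bullet> y u)) = ereal t"
        by (cases "(SUP u\<in>?U. ereal (d \<bullet> y u))") auto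
      have dyt: "d \<bullet> y u \<le> t" if "u \<in> ?U" for u
      proof -
        have "ereal (d \<bullet> y u) \<le> (SUP u\<in>?U. ereal (d \<bullet> y u))" using that by (rule SUP_upper)
        then show ?thesis using t by simp
      qed
      have bound: "\<forall>u\<in>?U. \<forall>w\<in>dual_set B d. w \<bullet> (F *v u - A *v x) \<le> t"
      proof (intro ballI)
        fix u w assume uU: "u \<in> ?U" and wW: "w \<in> dual_set B d"
        have wnn: "\<forall>l. 0 \<le> w$l" and Bw: "transpose B *v w = d" using wW by (auto simp: dual_set_def)
        have "\<forall>l. (F *v u - A *v x)$l \<le> (B *v y u)$l" using feas uU by (auto simp: algebra_simps)
        then have "w \<bullet> (F *v u - A *v x) \<le> w \<bullet> (B *v y u)" by (rule inner_mono_nonneg[OF wnn])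
        also have "\<dots> = d \<bullet> y u" using Bw by (simp only: inner_Bmult)
        also have "\<dots> \<le> t" using dyt uU by blast
        finally show "w \<bullet> (F *v u - A *v x) \<le> t" .
      qed
      show ?thesis
      proof (rule ereal_le_epsilon2)
        fix \<epsilon> :: real assume eps: "0 < \<epsilon>"
        obtain lam Lam rho where lr: "0 \<le> rho"
          "cop_matrix i1 d A B F x lam Lam rho \<in> copositive (prod_cone Uh :: (real^('k+'m)) set)"
          "lam + r * rho \<le> t + \<epsilon>"
          using dual_feasible[OF Uh_cone Uh_convex Uh_closed U_ne U_compact Uh_orthant bound eps] by blast
        have "rlp_bar_value i1 X c d A B F Uh r \<le> ereal (c \<bullet> x + lam + r * rho)"
          unfolding rlp_bar_value_def by (rule Inf_lower) (use xX lr in blast)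
        also have "\<dots> \<le> e + ereal \<epsilon>" using lr(3) by (simp add: e t)
        finally show "rlp_bar_value i1 X c d A B F Uh r \<le> e + ereal \<epsilon>" .
      qed
    qed
  qed
next
  let ?U = "unc_set i1 Uh"
  show "rlp_value X c d A B F ?U \<le> rlp_bar_value i1 X c d A B F Uh r"
    unfolding rlp_bar_value_def
  proof (rule Inf_greatest)
    fix e assume "e \<in> {ereal (c \<bullet> x + lam + r * rho) | x lam (Lam :: real^'n2^('k + 'm)) rho.
            x \<in> X \<and> rho \<ge> 0 \<and>
            cop_matrix i1 d A B F x lam Lam rho \<in> copositive (prod_cone Uh :: (real^('k+'m)) set)}"
    then obtain x lam Lam rho where e: "e = ereal (c \<bullet> x + lam + r * rho)" and xX: "x \<in> X"
      and rho: "0 \<le> rho" and cop: "cop_matrix i1 d A B F x lam (Lam :: real^'n2^('k + 'm)) rho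
           \<in> copositive (prod_cone Uh :: (real^('k+'m)) set)"
      by blast
    have ex: "\<exists>yv. (\<forall>l. (F *v u - A *v x)$l \<le> (B *v yv)$l) \<and> d \<bullet> yv \<le> lam + r * rho"
      if uU: "u \<in> ?U" for u
    proof -
      obtain y0 where y0: "\<forall>l. (B *v y0) $ l \<ge> (F *v u - A *v x) $ l" using A4 xX uU by blast
      then have y0': "\<forall>l. (F *v u - A *v x)$l \<le> (B *v y0)$l" by blast
      show ?thesis
      proof (rule lp_dual[OF y0'])
      fix w assume ext: "w extreme_point_of dual_set B d"
      then have wW: "w \<in> dual_set B d" by (simp add: extreme_point_of_def)
      have wnn: "\<forall>l. 0 \<le> w$l" and Bw: "transpose B *v w = d" using wW by (auto simp: dual_set_def)
      have uUh: "u \<in> Uh" and u1: "u $ i1 = 1" using uU by (auto simp: unc_set_def)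
      have zK: "join_vec u w \<in> prod_cone Uh" using uUh wnn by (simp add: join_in_prod_cone)
      have "0 \<le> cop_matrix i1 d A B F x lam Lam rho \<bullet> outer (join_vec u w)"
        using cop zK by (simp add: cop_mem)
      also have "\<dots> = lam - (w \<bullet> (F *v u) - w \<bullet> (A *v x)) + rho * (norm u ^ 2 + norm w ^ 2)"
        by (rule cop_eval[OF Bw u1])
      finally have "w \<bullet> (F *v u) - w \<bullet> (A *v x) \<le> lam + rho * (norm u ^ 2 + norm w ^ 2)" by simp
      also have "rho * (norm u ^ 2 + norm w ^ 2) \<le> rho * r"
        using r_bound uU ext rho by (intro mult_left_mono) auto
      finally show "w \<bullet> (F *v u - A *v x) \<le> lam + r * rho" by (simp add: inner_diff_right mult.commute)
      qed
    qed
    define y where "y u = (SOME yv. (\<forall>l. (F *v u - A *v x)$l \<le> (B *v yv)$l) \<and> d \<bullet> yv \<le> lam + r * rho)" for u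
    have y: "(\<forall>l. (F *v u - A *v x)$l \<le> (B *v y u)$l) \<and> d \<bullet> y u \<le> lam + r * rho" if "u \<in> ?U" for u
      unfolding y_def by (rule someI_ex[OF ex[OF that]])
    have feas: "\<forall>u\<in>?U. \<forall>l. (A *v x + B *v y u) $ l \<ge> (F *v u) $ l"
      using y by (auto simp: algebra_simps)
    have "rlp_value X c d A B F ?U \<le> ereal (c \<bullet> x) + (SUP u\<in>?U. ereal (d \<bullet> y u))"
      unfolding rlp_value_def by (rule Inf_lower) (use xX feas in blast)
    also have "\<dots> \<le> ereal (c \<bullet> x) + ereal (lam + r * rho)"
      by (intro add_left_mono SUP_least) (use y in auto)
    also have "\<dots> = e" by (simp add: e)
    finally show "rlp_value X c d A B F ?U \<le> e" .
  qed
qed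

end
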